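(* Let $X_1,X_2$ be independent real random variables with densities symmetric about their means $\mu_1,\mu_2$ and positive on all of $\mathbb{R}$, and let $\Theta$ be a $[0,1]$-valued random variable with density $\pi$, independent of $(X_1,X_2)$. For $w,\theta\in[0,1]$ let $$L(w\mid\theta)=\theta\,\mathbf{E}\big[(X_1-\mu_1)^2\mathbf{1}\big((1-w)(X_2-\mu_2)^2\ge w(X_1-\mu_1)^2\big)\big]+(1-\theta)\,\mathbf{E}\big[(X_2-\mu_2)^2\mathbf{1}\big((1-w)(X_2-\mu_2)^2< w(X_1-\mu_1)^2\big)\big],$$ and for a weight vector $\bar w=(w_1,\dots,w_n)\in[0,1]^n$ let the ex ante expected loss of the receiver be $$\mathcal{L}(\bar w)=\int_0^1\min\{L(w_1\mid\theta),\dots,L(w_n\mid\theta)\}\,\pi(\theta)\,d\theta.$$ Suppose a social planner chooses a weight vector $\bar w^\star$ of the WQD policy that minimizes $\mathcal{L}$ over $[0,1]^n$. Then there exists a Bayesian Nash Equilibrium in which the platform uses the WQD policy with these weights (with messages labeled so that the weights are in increasing order).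
   Context: $[n]=\{1,\dots,n\}$. Game: the receiver observes $\Theta=\theta$ and sends $m=\psi(\theta)\in[n]$; the platform observes $(m,X_1=x_1,X_2=x_2)$ and chooses $s=\gamma(m,x_1,x_2)\in\{1,2\}$; the receiver observes $y=(s,x_s)$ and outputs $(\hat x_1,\hat x_2)=\eta(y,m)$. Both agents have loss $\ell=\theta(x_1-\hat x_1)^2+(1-\theta)(x_2-\hat x_2)^2$. Receiver's expected loss: $\mathcal{J}_R(m\mid\theta,\gamma,\eta)=\mathbf{E}[\ell\mid\Theta=\theta]$ (over $X_1,X_2$). Platform's expected loss: $\mathcal{J}_P(s\mid m,x_1,x_2,\psi,\eta)=\mathbf{E}[\ell\mid X_1=x_1,X_2=x_2,M=m]$ (over $\Theta$, with $M=\psi(\Theta)$). A triple $(\psi^\star,\gamma^\star,\eta^\star)$ is a Bayesian Nash Equilibrium if (1) for all $\theta\in[0,1]$ and $m\in[n]$, $\mathcal{J}_R(\psi^\star(\theta)\mid\theta,\gamma^\star,\eta^\star)\le\mathcal{J}_R(m\mid\theta,\gamma^\star,\eta^\star)$; (2) for all $m$, $(x_1,x_2)$, $s$, $\mathcal{J}_P(\gamma^\star(m,x_1,x_2)\mid m,x_1,x_2,\psi^\star,\eta^\star)\le\mathcal{J}_P(s\mid m,x_1,x_2,\psi^\star,\eta^\star)$; (3) $\eta^\star(y,m)=(\mathbf{E}[X_1\mid M=m,Y=y],\mathbf{E}[X_2\mid M=m,Y=y])$ under $\psi^\star,\gamma^\star$. A WQD (weighted-quadratic disclosure) policy with weights $w_1,\dots,w_n\in[0,1]$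 sets $\gamma(m,x_1,x_2)=1$ if $w_m(x_1-\mu_1)^2>(1-w_m)(x_2-\mu_2)^2$ and $2$ otherwise. *)

theory Defs
  imports "HOL-Analysis.Analysis"
begin

text \<open>Observed coordinate: y = (s, x_s).\<close>
definition xsel :: "nat \<Rightarrow> real \<Rightarrow> real \<Rightarrow> real" where
  "xsel s x1 x2 = (if s = 1 then x1 else x2)"

definition qloss :: "real \<Rightarrow> real \<Rightarrow> real \<Rightarrow> real \<times> real \<Rightarrow> real" where
  "qloss \<theta> x1 x2 xh = \<theta> * (x1 - fst xh)^2 + (1 - \<theta>) * (x2 - snd xh)^2"

definition EXX :: "(real \<Rightarrow> real) \<Rightarrow> (real \<Rightarrow> real) \<Rightarrow> (real \<Rightarrow> real \<Rightarrow> real) \<Rightarrow> real" where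
  "EXX f1 f2 g =
     (LINT z | (density lborel (\<lambda>x. ennreal (f1 x)) \<Otimes>\<^sub>M density lborel (\<lambda>x. ennreal (f2 x))).
        g (fst z) (snd z))"

definition JR :: "(real \<Rightarrow> real) \<Rightarrow> (real \<Rightarrow> real) \<Rightarrow> (nat \<Rightarrow> real \<Rightarrow> real \<Rightarrow> nat)
    \<Rightarrow> (nat \<times> real \<Rightarrow> nat \<Rightarrow> real \<times> real) \<Rightarrow> nat \<Rightarrow> real \<Rightarrow> real" where
  "JR f1 f2 \<gamma> \<eta> m \<theta> =
     EXX f1 f2 (\<lambda>x1 x2. qloss \<theta> x1 x2 (\<eta> (\<gamma> m x1 x2, xsel (\<gamma> m x1 x2) x1 x2) m))"

text \<open>P(M = m) with M = psi(Theta), Theta having density p on [0,1].\<close>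
definition probM :: "(real \<Rightarrow> real) \<Rightarrow> (real \<Rightarrow> nat) \<Rightarrow> nat \<Rightarrow> real" where
  "probM p \<psi> m = (LINT \<theta>:{\<theta>\<in>{0..1}. \<psi> \<theta> = m}|lborel. p \<theta>)"

text \<open>Platform's expected loss J_P(s | m, x1, x2, psi, eta) = E[l | X = x, M = m]
  (elementary conditional expectation E[l 1(M=m)] / P(M=m); Theta independent of X).\<close>
definition JP :: "(real \<Rightarrow> real) \<Rightarrow> (real \<Rightarrow> nat) \<Rightarrow> (nat \<times> real \<Rightarrow> nat \<Rightarrow> real \<times> real)
    \<Rightarrow> nat \<Rightarrow> nat \<Rightarrow> real \<Rightarrow> real \<Rightarrow> real" where
  "JP p \<psi> \<eta> s m x1 x2 =
     (LINT \<theta>:{\<theta>\<in>{0..1}. \<psi> \<theta> = m}|lborel. qloss \<theta> x1 x2 (\<eta> (s, xsel s x1 x2) m) * p \<theta>)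
     / probM p \<psi> m"

text \<open>Joint density of (M = m, Y = (s, x)) weighted by h(X1, X2):
  E[h(X1,X2); M = m, S = s, X_s \<in> dx] / dx.\<close>
definition condpart :: "(real \<Rightarrow> real) \<Rightarrow> (real \<Rightarrow> real) \<Rightarrow> (real \<Rightarrow> real) \<Rightarrow> (real \<Rightarrow> nat)
    \<Rightarrow> (nat \<Rightarrow> real \<Rightarrow> real \<Rightarrow> nat) \<Rightarrow> nat \<Rightarrow> nat \<Rightarrow> real \<Rightarrow> (real \<Rightarrow> real \<Rightarrow> real) \<Rightarrow> real" where
  "condpart f1 f2 p \<psi> \<gamma> m s x h =
     probM p \<psi> m *
     (if s = 1 then f1 x * (LINT x2|lborel. h x x2 * indicator {x2. \<gamma> m x x2 = 1} x2 * f2 x2)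
      else f2 x * (LINT x1|lborel. h x1 x * indicator {x1. \<gamma> m x1 x = 2} x1 * f1 x1))"

text \<open>Bayesian Nash Equilibrium (with messages in {1..n}); strategies are required
  to be measurable so that M and Y are random variables.  Condition (3) is imposed
  wherever the conditioning event has positive (joint) density.\<close>
definition BNE :: "nat \<Rightarrow> (real \<Rightarrow> real) \<Rightarrow> (real \<Rightarrow> real) \<Rightarrow> (real \<Rightarrow> real)
    \<Rightarrow> (real \<Rightarrow> nat) \<Rightarrow> (nat \<Rightarrow> real \<Rightarrow> real \<Rightarrow> nat) \<Rightarrow> (nat \<times> real \<Rightarrow> nat \<Rightarrow> real \<times> real) \<Rightarrow> bool" where
  "BNE n f1 f2 p \<psi> \<gamma> \<eta> \<longleftrightarrow>
     \<psi> \<in> lborel \<rightarrow>\<^sub>M count_space UNIV \<and> (\<forall>\<theta>\<in>{0..1}. \<psi> \<theta> \<in> {1..n}) \<and>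
     (\<forall>m. (\<lambda>z. \<gamma> m (fst z) (snd z)) \<in> (lborel \<Otimes>\<^sub>M lborel) \<rightarrow>\<^sub>M count_space UNIV) \<and>
     (\<forall>m x1 x2. \<gamma> m x1 x2 \<in> {1, 2}) \<and>
     (\<forall>s m. (\<lambda>x. \<eta> (s, x) m) \<in> borel_measurable lborel) \<and>
     (\<forall>\<theta>\<in>{0..1}. \<forall>m\<in>{1..n}. JR f1 f2 \<gamma> \<eta> (\<psi> \<theta>) \<theta> \<le> JR f1 f2 \<gamma> \<eta> m \<theta>) \<and>
     (\<forall>m\<in>{1..n}. \<forall>x1 x2. \<forall>s\<in>{1, 2}. JP p \<psi> \<eta> (\<gamma> m x1 x2) m x1 x2 \<le> JP p \<psi> \<eta> s m x1 x2) \<and>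
     (\<forall>m\<in>{1..n}. \<forall>s\<in>{1, 2}. \<forall>x.
        condpart f1 f2 p \<psi> \<gamma> m s x (\<lambda>_ _. 1) > 0 \<longrightarrow>
        \<eta> (s, x) m = (condpart f1 f2 p \<psi> \<gamma> m s x (\<lambda>a b. a) / condpart f1 f2 p \<psi> \<gamma> m s x (\<lambda>_ _. 1),
                       condpart f1 f2 p \<psi> \<gamma> m s x (\<lambda>a b. b) / condpart f1 f2 p \<psi> \<gamma> m s x (\<lambda>_ _. 1)))"

definition wqd :: "real \<Rightarrow> real \<Rightarrow> (nat \<Rightarrow> real) \<Rightarrow> nat \<Rightarrow> real \<Rightarrow> real \<Rightarrow> nat" where
  "wqd \<mu>1 \<mu>2 w m x1 x2 = (if w m * (x1 - \<mu>1)^2 > (1 - w m) * (x2 - \<mu>2)^2 then 1 else 2)"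

definition Lw :: "(real \<Rightarrow> real) \<Rightarrow> (real \<Rightarrow> real) \<Rightarrow> real \<Rightarrow> real \<Rightarrow> real \<Rightarrow> real \<Rightarrow> real" where
  "Lw f1 f2 \<mu>1 \<mu>2 w \<theta> =
     \<theta> * EXX f1 f2 (\<lambda>x1 x2. (x1 - \<mu>1)^2 *
                         (if (1 - w) * (x2 - \<mu>2)^2 \<ge> w * (x1 - \<mu>1)^2 then 1 else 0))
   + (1 - \<theta>) * EXX f1 f2 (\<lambda>x1 x2. (x2 - \<mu>2)^2 *
                         (if (1 - w) * (x2 - \<mu>2)^2 < w * (x1 - \<mu>1)^2 then 1 else 0))"

definition Lbar :: "nat \<Rightarrow> (real \<Rightarrow> real) \<Rightarrow> (real \<Rightarrow> real) \<Rightarrow> real \<Rightarrow> real \<Rightarrow> (real \<Rightarrow> real)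
    \<Rightarrow> (nat \<Rightarrow> real) \<Rightarrow> real" where
  "Lbar n f1 f2 \<mu>1 \<mu>2 p w =
     (LINT \<theta>:{0..1}|lborel. Min ((\<lambda>i. Lw f1 f2 \<mu>1 \<mu>2 (w i) \<theta>) ` {1..n}) * p \<theta>)"

end

theory Submission
  imports Defs "HOL-Probability.Probability_Measure"
begin


lemma dens_prob:
  fixes f :: "real \<Rightarrow> real"
  assumes m: "f \<in> borel_measurable lborel" and pos: "\<forall>x. f x > 0"
    and i: "integrable lborel f" and o: "integral\<^sup>L lborel f = 1"
  shows "prob_space (density lborel (\<lambda>x. ennreal (f x)))"
proof (rule prob_spaceI)
  have "(\<integral>\<^sup>+ x. ennreal (f x) \<partial>lborel) = ennreal (integral\<^sup>L lborel f)"
    using i pos by (intro nn_integral_eq_integral) (auto simp: less_imp_le)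
  then show "emeasure (density lborel (\<lambda>x. ennreal (f x))) (space (density lborel (\<lambda>x. ennreal (f x)))) = 1"
    using m o by (simp add: emeasure_density)
qed

lemma dens_integrable:
  fixes f g :: "real \<Rightarrow> real"
  assumes m: "f \<in> borel_measurable lborel" and pos: "\<forall>x. f x > 0"
    and g: "g \<in> borel_measurable lborel"
    and i: "integrable lborel (\<lambda>x. f x * g x)"
  shows "integrable (density lborel (\<lambda>x. ennreal (f x))) g"
proof -
  have "integrable (density lborel f) g"
    using m g pos i by (subst integrable_density) (auto simp: less_imp_le)
  then show ?thesis by simp
qed

lemma sq_integrable:
  fixes f :: "real \<Rightarrow> real"
  assumes m: "f \<in> borel_measurable lborel" and pos: "\<forall>x. f x > 0"
    and i: "integrable lborel f" and i1: "integrable lborel (\<lambda>x. x * f x)"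
    and i2: "integrable lborel (\<lambda>x. x^2 * f x)"
  shows "integrable (density lborel (\<lambda>x. ennreal (f x))) (\<lambda>x. (x - c)^2)"
proof (rule dens_integrable[OF m pos])
  have e: "(\<lambda>x. f x * (x - c)^2) = (\<lambda>x. x^2 * f x - 2 * c * (x * f x) + c^2 * f x)"
    by (auto simp: power2_eq_square algebra_simps)
  show "integrable lborel (\<lambda>x. f x * (x - c)^2)"
    unfolding e using i i1 i2 by auto
qed auto

locale pp =
  fixes D1 D2 :: "real measure"
  assumes P1: "prob_space D1" and P2: "prob_space D2"
    and s1: "sets D1 = sets borel" and s2: "sets D2 = sets borel"
begin

sublocale pair_prob_space D1 D2
  using P1 P2 by (simp add: pair_prob_space_def pair_sigma_finite_def prob_space_imp_sigma_finite)

lemma distr_snd: "distr (D1 \<Otimes>\<^sub>M D2) D2 snd = D2"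
proof (intro measure_eqI)
  fix A assume A: "A \<in> sets (distr (D1 \<Otimes>\<^sub>M D2) D2 snd)"
  from A have "emeasure (distr (D1 \<Otimes>\<^sub>M D2) D2 snd) A = emeasure (D1 \<Otimes>\<^sub>M D2) (space D1 \<times> A)"
    by (auto simp add: emeasure_distr space_pair_measure dest: sets.sets_into_space intro!: arg_cong2[where f=emeasure])
  with A show "emeasure (distr (D1 \<Otimes>\<^sub>M D2) D2 snd) A = emeasure D2 A"
    by (simp add: M2.emeasure_pair_measure_Times M1.emeasure_space_1)
qed simp

lemma int_fst:
  fixes g :: "real \<Rightarrow> real"
  assumes "integrable D1 g" "g \<in> borel_measurable D1"
  shows "integrable (D1 \<Otimes>\<^sub>M D2) (\<lambda>z. g (fst z))"
proof -
  have "integrable (distr (D1 \<Otimes>\<^sub>M D2) D1 fst) g"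
    using assms M2.distr_pair_fst[of D1] by simp
  moreover have "integrable (distr (D1 \<Otimes>\<^sub>M D2) D1 fst) g \<longleftrightarrow> integrable (D1 \<Otimes>\<^sub>M D2) (\<lambda>z. g (fst z))"
    using assms by (intro integrable_distr_eq[where M="D1 \<Otimes>\<^sub>M D2", where f=g]) auto
  ultimately show ?thesis by simp
qed

lemma int_snd:
  fixes g :: "real \<Rightarrow> real"
  assumes "integrable D2 g" "g \<in> borel_measurable D2"
  shows "integrable (D1 \<Otimes>\<^sub>M D2) (\<lambda>z. g (snd z))"
proof -
  have "integrable (distr (D1 \<Otimes>\<^sub>M D2) D2 snd) g"
    using assms distr_snd by simp
  moreover have "integrable (distr (D1 \<Otimes>\<^sub>M D2) D2 snd) g \<longleftrightarrow> integrable (D1 \<Otimes>\<^sub>M D2) (\<lambda>z. g (snd z))"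
    using assms by (intro integrable_distr_eq[where M="D1 \<Otimes>\<^sub>M D2", where f=g]) auto
  ultimately show ?thesis by simp
qed

end



lemma dens_pos:
  fixes f :: "real \<Rightarrow> real"
  assumes m: "f \<in> borel_measurable lborel" and pos: "\<forall>x. f x > 0"
    and A: "open A" "x \<in> A"
  shows "emeasure (density lborel (\<lambda>x. ennreal (f x))) A > 0"
proof (rule ccontr)
  assume "\<not> ?thesis"
  then have z: "emeasure (density lborel (\<lambda>x. ennreal (f x))) A = 0" by simp
  have Am: "A \<in> sets lborel" using A by auto
  have "(\<integral>\<^sup>+ x. ennreal (f x) * indicator A x \<partial>lborel) = 0"
    using z m Am by (simp add: emeasure_density)
  then have ae: "AE x in lborel. ennreal (f x) * indicator A x = 0"
    using m Am by (subst (asm) nn_integral_0_iff_AE) auto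
  have nz: "\<And>x. ennreal (f x) \<noteq> 0" using pos by (metis ennreal_eq_0_iff not_le)
  from ae have "AE x in lborel. x \<notin> A"
    by eventually_elim (use nz in \<open>auto simp: indicator_def split: if_splits\<close>)
  then have e0: "emeasure lborel A = 0"
    using Am by (subst (asm) AE_iff_measurable[of A]) auto
  obtain e where e: "e > 0" "ball x e \<subseteq> A" using A open_contains_ball by blast
  have "emeasure lborel (ball x e) \<le> emeasure lborel A"
    using e Am by (intro emeasure_mono) auto
  moreover have "emeasure lborel (ball x e) = ennreal (2 * e)"
    using e by (simp add: ball_eq_greaterThanLessThan)
  ultimately show False using e e0 by simp
qed




definition G1 :: "real \<Rightarrow> real \<Rightarrow> real \<Rightarrow> real \<Rightarrow> real \<Rightarrow> real" where
  "G1 \<mu>1 \<mu>2 w x1 x2 = (x1 - \<mu>1)^2 * (if (1 - w) * (x2 - \<mu>2)^2 \<ge> w * (x1 - \<mu>1)^2 then 1 else 0)"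
definition G2 :: "real \<Rightarrow> real \<Rightarrow> real \<Rightarrow> real \<Rightarrow> real \<Rightarrow> real" where
  "G2 \<mu>1 \<mu>2 w x1 x2 = (x2 - \<mu>2)^2 * (if (1 - w) * (x2 - \<mu>2)^2 < w * (x1 - \<mu>1)^2 then 1 else 0)"

definition eta0 :: "real \<Rightarrow> real \<Rightarrow> nat \<times> real \<Rightarrow> nat \<Rightarrow> real \<times> real" where
  "eta0 \<mu>1 \<mu>2 y m = (if fst y = 1 then (snd y, \<mu>2) else (\<mu>1, snd y))"

lemma Lw_G: "Lw f1 f2 \<mu>1 \<mu>2 w \<theta> = \<theta> * EXX f1 f2 (G1 \<mu>1 \<mu>2 w) + (1 - \<theta>) * EXX f1 f2 (G2 \<mu>1 \<mu>2 w)"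
proof -
  have "G1 \<mu>1 \<mu>2 w = (\<lambda>x1 x2. (x1 - \<mu>1)^2 * (if (1 - w) * (x2 - \<mu>2)^2 \<ge> w * (x1 - \<mu>1)^2 then 1 else 0))"
    by (auto simp: G1_def fun_eq_iff)
  moreover have "G2 \<mu>1 \<mu>2 w = (\<lambda>x1 x2. (x2 - \<mu>2)^2 * (if (1 - w) * (x2 - \<mu>2)^2 < w * (x1 - \<mu>1)^2 then 1 else 0))"
    by (auto simp: G2_def fun_eq_iff)
  ultimately show ?thesis by (simp add: Lw_def)
qed

locale gm =
  fixes f1 f2 :: "real \<Rightarrow> real" and \<mu>1 \<mu>2 :: real
  assumes f1_meas: "f1 \<in> borel_measurable lborel"
    and f1_pos: "\<forall>x. f1 x > 0"
    and f1_int: "integrable lborel f1" and f1_one: "integral\<^sup>L lborel f1 = 1"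
    and f1_mean_int: "integrable lborel (\<lambda>x. x * f1 x)"
    and f1_sym: "\<forall>t. f1 (\<mu>1 + t) = f1 (\<mu>1 - t)"
    and f1_var: "integrable lborel (\<lambda>x. x^2 * f1 x)"
    and f2_meas: "f2 \<in> borel_measurable lborel"
    and f2_pos: "\<forall>x. f2 x > 0"
    and f2_int: "integrable lborel f2" and f2_one: "integral\<^sup>L lborel f2 = 1"
    and f2_mean_int: "integrable lborel (\<lambda>x. x * f2 x)"
    and f2_sym: "\<forall>t. f2 (\<mu>2 + t) = f2 (\<mu>2 - t)"
    and f2_var: "integrable lborel (\<lambda>x. x^2 * f2 x)"
begin

abbreviation "D1 \<equiv> density lborel (\<lambda>x. ennreal (f1 x))"
abbreviation "D2 \<equiv> density lborel (\<lambda>x. ennreal (f2 x))"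

sublocale pp D1 D2
  using dens_prob[OF f1_meas f1_pos f1_int f1_one] dens_prob[OF f2_meas f2_pos f2_int f2_one]
  by (intro pp.intro) auto

lemma sets_M: "sets (D1 \<Otimes>\<^sub>M D2) = sets (borel \<Otimes>\<^sub>M borel)"
  by (rule sets_pair_measure_cong) auto

lemma measM: "h \<in> borel_measurable (borel \<Otimes>\<^sub>M borel) \<Longrightarrow> h \<in> borel_measurable (D1 \<Otimes>\<^sub>M D2)"
  using measurable_cong_sets[OF sets_M refl] by blast

lemma ia: "integrable (D1 \<Otimes>\<^sub>M D2) (\<lambda>z. (fst z - \<mu>1)^2)"
  by (rule int_fst[OF sq_integrable[OF f1_meas f1_pos f1_int f1_mean_int f1_var]]) auto

lemma ib: "integrable (D1 \<Otimes>\<^sub>M D2) (\<lambda>z. (snd z - \<mu>2)^2)"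
  by (rule int_snd[OF sq_integrable[OF f2_meas f2_pos f2_int f2_mean_int f2_var]]) auto

lemma iG1: "integrable (D1 \<Otimes>\<^sub>M D2) (\<lambda>z. G1 \<mu>1 \<mu>2 w (fst z) (snd z))"
proof (rule Bochner_Integration.integrable_bound[OF ia])
  show "(\<lambda>z. G1 \<mu>1 \<mu>2 w (fst z) (snd z)) \<in> borel_measurable (D1 \<Otimes>\<^sub>M D2)"
    unfolding G1_def by (intro measM) measurable
  show "AE z in D1 \<Otimes>\<^sub>M D2. norm (G1 \<mu>1 \<mu>2 w (fst z) (snd z)) \<le> norm ((fst z - \<mu>1)^2)"
    by (auto simp: G1_def)
qed

lemma iG2: "integrable (D1 \<Otimes>\<^sub>M D2) (\<lambda>z. G2 \<mu>1 \<mu>2 w (fst z) (snd z))"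
proof (rule Bochner_Integration.integrable_bound[OF ib])
  show "(\<lambda>z. G2 \<mu>1 \<mu>2 w (fst z) (snd z)) \<in> borel_measurable (D1 \<Otimes>\<^sub>M D2)"
    unfolding G2_def by (intro measM) measurable
  show "AE z in D1 \<Otimes>\<^sub>M D2. norm (G2 \<mu>1 \<mu>2 w (fst z) (snd z)) \<le> norm ((snd z - \<mu>2)^2)"
    by (auto simp: G2_def)
qed

lemma JR_eq: "JR f1 f2 (wqd \<mu>1 \<mu>2 v) (eta0 \<mu>1 \<mu>2) m \<theta> = Lw f1 f2 \<mu>1 \<mu>2 (v m) \<theta>"
proof -
  have pw: "qloss \<theta> x1 x2 (eta0 \<mu>1 \<mu>2 (wqd \<mu>1 \<mu>2 v m x1 x2, xsel (wqd \<mu>1 \<mu>2 v m x1 x2) x1 x2) m)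
      = \<theta> * G1 \<mu>1 \<mu>2 (v m) x1 x2 + (1 - \<theta>) * G2 \<mu>1 \<mu>2 (v m) x1 x2" for x1 x2
    by (simp add: qloss_def eta0_def wqd_def xsel_def G1_def G2_def not_less)
  have "JR f1 f2 (wqd \<mu>1 \<mu>2 v) (eta0 \<mu>1 \<mu>2) m \<theta>
     = integral\<^sup>L (D1 \<Otimes>\<^sub>M D2) (\<lambda>z. \<theta> * G1 \<mu>1 \<mu>2 (v m) (fst z) (snd z) + (1 - \<theta>) * G2 \<mu>1 \<mu>2 (v m) (fst z) (snd z))"
    by (simp add: JR_def EXX_def pw)
  also have "\<dots> = \<theta> * EXX f1 f2 (G1 \<mu>1 \<mu>2 (v m)) + (1 - \<theta>) * EXX f1 f2 (G2 \<mu>1 \<mu>2 (v m))"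
    using iG1 iG2 by (simp add: EXX_def)
  finally show ?thesis by (simp add: Lw_G)
qed

end



lemma pw_nonneg:
  fixes a b t w :: real
  shows "t * (a * (if (1-w)*b \<ge> w*a then 1 else 0)) + (1-t) * (b * (if (1-w)*b < w*a then 1 else 0))
    - (t * (a * (if (1-t)*b \<ge> t*a then 1 else 0)) + (1-t) * (b * (if (1-t)*b < t*a then 1 else 0))) \<ge> 0"
  by (auto simp: algebra_simps)

lemma pw_pos:
  fixes a b t w :: real
  assumes "((1-w)*b - w*a) * ((1-t)*b - t*a) < 0"
  shows "t * (a * (if (1-w)*b \<ge> w*a then 1 else 0)) + (1-t) * (b * (if (1-w)*b < w*a then 1 else 0))
    - (t * (a * (if (1-t)*b \<ge> t*a then 1 else 0)) + (1-t) * (b * (if (1-t)*b < t*a then 1 else 0))) \<noteq> 0"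
proof -
  have "((1-w)*b - w*a > 0 \<and> (1-t)*b - t*a < 0) \<or> ((1-w)*b - w*a < 0 \<and> (1-t)*b - t*a > 0)"
    using assms by (auto simp: mult_less_0_iff)
  then show ?thesis
  proof
    assume h: "(1-w)*b - w*a > 0 \<and> (1-t)*b - t*a < 0"
    then have c: "(1-w)*b \<ge> w*a" "\<not> (1-w)*b < w*a" "\<not> (1-t)*b \<ge> t*a" "(1-t)*b < t*a" by auto
    show ?thesis unfolding if_P[OF c(1)] if_not_P[OF c(2)] if_not_P[OF c(3)] if_P[OF c(4)]
      using h by (simp add: algebra_simps)
  next
    assume h: "(1-w)*b - w*a < 0 \<and> (1-t)*b - t*a > 0"
    then have c: "\<not> (1-w)*b \<ge> w*a" "(1-w)*b < w*a" "(1-t)*b \<ge> t*a" "\<not> (1-t)*b < t*a" by auto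
    show ?thesis unfolding if_not_P[OF c(1)] if_P[OF c(2)] if_P[OF c(3)] if_not_P[OF c(4)]
      using h by (simp add: algebra_simps)
  qed
qed

context gm begin

lemma Lw_int: "Lw f1 f2 \<mu>1 \<mu>2 u t = integral\<^sup>L (D1 \<Otimes>\<^sub>M D2)
   (\<lambda>z. t * G1 \<mu>1 \<mu>2 u (fst z) (snd z) + (1 - t) * G2 \<mu>1 \<mu>2 u (fst z) (snd z))"
  using iG1 iG2 by (simp add: EXX_def Lw_G)

lemma Lw_strict:
  assumes t: "t \<in> {0..1}" and w: "w \<in> {0..1}" and wt: "w \<noteq> t"
  shows "Lw f1 f2 \<mu>1 \<mu>2 t t < Lw f1 f2 \<mu>1 \<mu>2 w t"
proof -
  let ?M = "D1 \<Otimes>\<^sub>M D2"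
  define h where "h u z = t * G1 \<mu>1 \<mu>2 u (fst z) (snd z) + (1 - t) * G2 \<mu>1 \<mu>2 u (fst z) (snd z)" for u z
  define d where "d z = h w z - h t z" for z
  have ih: "integrable ?M (h u)" for u unfolding h_def using iG1 iG2 by auto
  have id: "integrable ?M d" unfolding d_def using ih by auto
  have dint: "integral\<^sup>L ?M d = Lw f1 f2 \<mu>1 \<mu>2 w t - Lw f1 f2 \<mu>1 \<mu>2 t t"
    unfolding d_def using ih by (simp add: Lw_int h_def[abs_def])
  have dnn: "d z \<ge> 0" for z
    unfolding d_def h_def G1_def G2_def by (rule pw_nonneg)
  define U where "U = {z::real\<times>real. ((1-w)*(snd z-\<mu>2)^2 - w*(fst z-\<mu>1)^2) * ((1-t)*(snd z-\<mu>2)^2 - t*(fst z-\<mu>1)^2) < 0}"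
  have dU: "d z \<noteq> 0" if "z \<in> U" for z
    using that unfolding U_def d_def h_def G1_def G2_def by (intro pw_pos) auto
  have oU: "open U"
    unfolding U_def by (intro open_Collect_less continuous_intros)
  define s where "s = (w + t) / 2"
  have s01: "0 \<le> s" "s \<le> 1" using t w by (auto simp: s_def)
  have z0: "(\<mu>1 + sqrt (1 - s), \<mu>2 + sqrt s) \<in> U"
  proof -
    have "((1-w) * s - w * (1-s)) * ((1-t) * s - t * (1-s)) = (s - w) * (s - (t::real))" by (simp add: algebra_simps)
    also have "\<dots> < 0" using wt by (auto simp: s_def mult_less_0_iff)
    finally show ?thesis using s01 by (simp add: U_def)
  qed
  obtain A B where AB: "open A" "open B" "(\<mu>1 + sqrt (1 - s), \<mu>2 + sqrt s) \<in> A \<times> B" "A \<times> B \<subseteq> U"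
    using open_prod_elim[OF oU z0] by blast
  have pA: "emeasure D1 A > 0" using AB by (intro dens_pos[OF f1_meas f1_pos]) auto
  have pB: "emeasure D2 B > 0" using AB by (intro dens_pos[OF f2_meas f2_pos]) auto
  have ABs: "A \<times> B \<in> sets ?M" using AB by (intro pair_measureI) auto
  have pAB: "emeasure ?M (A \<times> B) > 0"
    using pA pB AB by (simp add: M2.emeasure_pair_measure_Times ennreal_zero_less_mult_iff)
  have "integral\<^sup>L ?M d \<noteq> 0"
  proof
    assume "integral\<^sup>L ?M d = 0"
    then have "AE z in ?M. d z = 0" using id dnn by (subst (asm) integral_nonneg_eq_0_iff_AE) auto
    then have "AE z in ?M. z \<notin> A \<times> B"
      by eventually_elim (use dU AB in blast)
    then have "emeasure ?M (A \<times> B) = 0"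
      using ABs by (subst (asm) AE_iff_measurable[of "A \<times> B"]) (auto simp: space_pair_measure)
    then show False using pAB by simp
  qed
  moreover have "integral\<^sup>L ?M d \<ge> 0" by (rule integral_nonneg_AE) (use dnn in auto)
  ultimately show ?thesis using dint by linarith
qed

end



lemma sym_zero:
  fixes g :: "real \<Rightarrow> real"
  assumes "\<forall>u. g (\<mu> + u) = g (\<mu> - u)"
  shows "(LINT x|lborel. (x - \<mu>) * g x) = 0"
proof -
  let ?F = "\<lambda>x. (x - \<mu>) * g x"
  have "(LINT x|lborel. ?F x) = \<bar>-1\<bar> *\<^sub>R (LINT x|lborel. ?F (2*\<mu> + (-1) * x))"
    by (rule lborel_integral_real_affine) simp
  also have "(\<lambda>x. ?F (2*\<mu> + (-1) * x)) = (\<lambda>x. - ?F x)"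
  proof
    fix x
    have "g (2*\<mu> + (-1) * x) = g (\<mu> + (\<mu> - x))" by (simp add: algebra_simps)
    also have "\<dots> = g (\<mu> - (\<mu> - x))" using assms by blast
    also have "\<dots> = g x" by simp
    finally show "?F (2*\<mu> + (-1) * x) = - ?F x" by (simp add: algebra_simps)
  qed
  finally have "(LINT x|lborel. ?F x) = - (LINT x|lborel. ?F x)" by simp
  then show ?thesis by linarith
qed

lemma cond_mean:
  fixes f :: "real \<Rightarrow> real" and P :: "real \<Rightarrow> bool"
  assumes fm: "f \<in> borel_measurable lborel" and fpos: "\<forall>x. f x > 0"
    and fi: "integrable lborel f" and fi1: "integrable lborel (\<lambda>x. x * f x)"
    and fs: "\<forall>u. f (\<mu> + u) = f (\<mu> - u)"
    and Ps: "\<forall>u. P (\<mu> + u) = P (\<mu> - u)"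
    and Pm: "{y. P y} \<in> sets borel"
  shows "(LINT y|lborel. y * indicator {y. P y} y * f y) = \<mu> * (LINT y|lborel. indicator {y. P y} y * f y)"
proof -
  let ?g = "\<lambda>y. indicator {y. P y} y * f y :: real"
  have gm: "?g \<in> borel_measurable lborel" using fm Pm by (intro borel_measurable_times) auto
  have gi: "integrable lborel ?g"
    by (rule Bochner_Integration.integrable_bound[OF fi gm]) (auto simp: indicator_def less_imp_le fpos)
  have i2: "integrable lborel (\<lambda>y. y * f y - \<mu> * f y)" using fi fi1 by auto
  have gi2: "integrable lborel (\<lambda>y. (y - \<mu>) * ?g y)"
  proof (rule Bochner_Integration.integrable_bound[OF i2])
    show "(\<lambda>y. (y - \<mu>) * ?g y) \<in> borel_measurable lborel" using gm by measurable
    show "AE x in lborel. norm ((x - \<mu>) * ?g x) \<le> norm (x * f x - \<mu> * f x)"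
      by (auto simp: indicator_def abs_mult left_diff_distrib[symmetric])
  qed
  have gs: "\<forall>u. ?g (\<mu> + u) = ?g (\<mu> - u)"
    using fs Ps by (auto simp: indicator_def)
  have "(LINT y|lborel. y * indicator {y. P y} y * f y) = (LINT y|lborel. (y - \<mu>) * ?g y + \<mu> * ?g y)"
    by (rule Bochner_Integration.integral_cong) (auto simp: algebra_simps)
  also have "\<dots> = (LINT y|lborel. (y - \<mu>) * ?g y) + \<mu> * (LINT y|lborel. ?g y)"
    using gi gi2 by simp
  also have "(LINT y|lborel. (y - \<mu>) * ?g y) = 0" by (rule sym_zero[OF gs])
  finally show ?thesis by simp
qed




context gm begin

lemma eta_ok:
  fixes v :: "nat \<Rightarrow> real"
  assumes pos: "condpart f1 f2 p \<psi> (wqd \<mu>1 \<mu>2 v) m s x (\<lambda>_ _. 1) > 0"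
  shows "eta0 \<mu>1 \<mu>2 (s, x) m =
     (condpart f1 f2 p \<psi> (wqd \<mu>1 \<mu>2 v) m s x (\<lambda>a b. a) / condpart f1 f2 p \<psi> (wqd \<mu>1 \<mu>2 v) m s x (\<lambda>_ _. 1),
      condpart f1 f2 p \<psi> (wqd \<mu>1 \<mu>2 v) m s x (\<lambda>a b. b) / condpart f1 f2 p \<psi> (wqd \<mu>1 \<mu>2 v) m s x (\<lambda>_ _. 1))"
proof (cases "s = 1")
  case True
  define S where "S = {y. (1 - v m) * (y - \<mu>2)^2 < v m * (x - \<mu>1)^2}"
  have setq: "{x2. wqd \<mu>1 \<mu>2 v m x x2 = 1} = S" by (auto simp: S_def wqd_def)
  define I where "I = (LINT y|lborel. indicator S y * f2 y)"
  have c1: "condpart f1 f2 p \<psi> (wqd \<mu>1 \<mu>2 v) m s x (\<lambda>_ _. 1) = probM p \<psi> m * (f1 x * I)"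
    using True unfolding condpart_def setq by (simp add: I_def)
  have "(LINT y|lborel. x * indicator S y * f2 y) = x * I"
    unfolding I_def by (simp add: mult.assoc)
  then have ca: "condpart f1 f2 p \<psi> (wqd \<mu>1 \<mu>2 v) m s x (\<lambda>a b. a) = probM p \<psi> m * (f1 x * (x * I))"
    using True unfolding condpart_def setq by simp
  have Sm: "S \<in> sets borel" unfolding S_def by measurable
  have "(LINT y|lborel. y * indicator S y * f2 y) = \<mu>2 * I"
    unfolding I_def S_def
    by (rule cond_mean[OF f2_meas f2_pos f2_int f2_mean_int f2_sym]) (use Sm in \<open>auto simp: S_def\<close>)
  then have cb: "condpart f1 f2 p \<psi> (wqd \<mu>1 \<mu>2 v) m s x (\<lambda>a b. b) = probM p \<psi> m * (f1 x * (\<mu>2 * I))"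
    using True unfolding condpart_def setq by simp
  have nz: "probM p \<psi> m * (f1 x * I) \<noteq> 0" using pos c1 by (metis less_irrefl)
  show ?thesis unfolding ca cb c1 using True nz by (simp add: eta0_def)
next
  case False
  define S where "S = {y. \<not> (1 - v m) * (x - \<mu>2)^2 < v m * (y - \<mu>1)^2}"
  have setq: "{x1. wqd \<mu>1 \<mu>2 v m x1 x = 2} = S" by (auto simp: S_def wqd_def)
  define I where "I = (LINT y|lborel. indicator S y * f1 y)"
  have c1: "condpart f1 f2 p \<psi> (wqd \<mu>1 \<mu>2 v) m s x (\<lambda>_ _. 1) = probM p \<psi> m * (f2 x * I)"
    using False unfolding condpart_def setq by (simp add: I_def)
  have "(LINT y|lborel. x * indicator S y * f1 y) = x * I"
    unfolding I_def by (simp add: mult.assoc)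
  then have cb: "condpart f1 f2 p \<psi> (wqd \<mu>1 \<mu>2 v) m s x (\<lambda>a b. b) = probM p \<psi> m * (f2 x * (x * I))"
    using False unfolding condpart_def setq by simp
  have Sm: "S \<in> sets borel" unfolding S_def by measurable
  have "(LINT y|lborel. y * indicator S y * f1 y) = \<mu>1 * I"
    unfolding I_def S_def
    by (rule cond_mean[OF f1_meas f1_pos f1_int f1_mean_int f1_sym]) (use Sm in \<open>auto simp: S_def\<close>)
  then have ca: "condpart f1 f2 p \<psi> (wqd \<mu>1 \<mu>2 v) m s x (\<lambda>a b. a) = probM p \<psi> m * (f2 x * (\<mu>1 * I))"
    using False unfolding condpart_def setq by simp
  have nz: "probM p \<psi> m * (f2 x * I) \<noteq> 0" using pos c1 by (metis less_irrefl)
  show ?thesis unfolding ca cb c1 using False nz by (simp add: eta0_def)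
qed

end



locale full = gm f1 f2 \<mu>1 \<mu>2 for f1 f2 \<mu>1 \<mu>2 +
  fixes p :: "real \<Rightarrow> real" and n :: nat and v :: "nat \<Rightarrow> real"
  assumes n1: "n \<ge> 1"
    and p_meas: "p \<in> borel_measurable lborel"
    and p_nonneg: "\<forall>\<theta>\<in>{0..1}. p \<theta> \<ge> 0"
    and p_int: "set_integrable lborel {0..1} p"
    and v_range: "\<forall>i\<in>{1..n}. v i \<in> {0..1}"
    and v_opt: "\<forall>w'. (\<forall>i\<in>{1..n}. w' i \<in> {0..1}) \<longrightarrow>
                  Lbar n f1 f2 \<mu>1 \<mu>2 p v \<le> Lbar n f1 f2 \<mu>1 \<mu>2 p w'"
begin

definition "Aw u = EXX f1 f2 (G1 \<mu>1 \<mu>2 u)"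
definition "Bw u = EXX f1 f2 (G2 \<mu>1 \<mu>2 u)"

lemma Lw_AB: "Lw f1 f2 \<mu>1 \<mu>2 u \<theta> = \<theta> * Aw u + (1 - \<theta>) * Bw u"
  by (simp add: Lw_G Aw_def Bw_def)

definition psi :: "real \<Rightarrow> nat" where
  "psi \<theta> = (LEAST i. i \<in> {1..n} \<and> (\<forall>j\<in>{1..n}. Lw f1 f2 \<mu>1 \<mu>2 (v i) \<theta> \<le> Lw f1 f2 \<mu>1 \<mu>2 (v j) \<theta>))"

lemma psi_prop: "psi \<theta> \<in> {1..n} \<and> (\<forall>j\<in>{1..n}. Lw f1 f2 \<mu>1 \<mu>2 (v (psi \<theta>)) \<theta> \<le> Lw f1 f2 \<mu>1 \<mu>2 (v j) \<theta>)"
proof -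
  let ?F = "(\<lambda>i. Lw f1 f2 \<mu>1 \<mu>2 (v i) \<theta>) ` {1..n}"
  have fin: "finite ?F" and ne: "?F \<noteq> {}" using n1 by auto
  obtain i where i: "i \<in> {1..n}" "Lw f1 f2 \<mu>1 \<mu>2 (v i) \<theta> = Min ?F"
    using Min_in[OF fin ne] by auto
  have "\<exists>i. i \<in> {1..n} \<and> (\<forall>j\<in>{1..n}. Lw f1 f2 \<mu>1 \<mu>2 (v i) \<theta> \<le> Lw f1 f2 \<mu>1 \<mu>2 (v j) \<theta>)"
    using i fin by (intro exI[of _ i]) auto
  then show ?thesis unfolding psi_def by (rule LeastI_ex)
qed

lemma psi_meas[measurable]: "psi \<in> lborel \<rightarrow>\<^sub>M count_space UNIV"
  unfolding psi_def Lw_AB by measurable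

lemma Min_psi: "Min ((\<lambda>i. Lw f1 f2 \<mu>1 \<mu>2 (v i) \<theta>) ` {1..n}) = Lw f1 f2 \<mu>1 \<mu>2 (v (psi \<theta>)) \<theta>"
  using psi_prop[of \<theta>] by (intro Min_eqI) auto

lemma Lbar_eq: "Lbar n f1 f2 \<mu>1 \<mu>2 p u =
   integral\<^sup>L lborel (\<lambda>\<theta>. indicator {0..1} \<theta> * (Min ((\<lambda>i. Lw f1 f2 \<mu>1 \<mu>2 (u i) \<theta>) ` {1..n}) * p \<theta>))"
  by (simp add: Lbar_def set_lebesgue_integral_def)

lemma int_S:
  assumes S: "S \<in> sets lborel" "S \<subseteq> {0..1}"
    and g: "g \<in> borel_measurable lborel" and K: "\<forall>\<theta>\<in>{0..1}. \<bar>g \<theta>\<bar> \<le> K"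
  shows "integrable lborel (\<lambda>\<theta>. indicator S \<theta> * (g \<theta> * p \<theta>))"
proof -
  have pi: "integrable lborel (\<lambda>\<theta>. indicator {0..1} \<theta> * p \<theta>)"
    using p_int by (simp add: set_integrable_def)
  show ?thesis
  proof (rule Bochner_Integration.integrable_bound)
    show "integrable lborel (\<lambda>\<theta>. K * (indicator {0..1} \<theta> * p \<theta>))" using pi by auto
    show "(\<lambda>\<theta>. indicator S \<theta> * (g \<theta> * p \<theta>)) \<in> borel_measurable lborel"
      using S g p_meas by measurable
    show "AE x in lborel. norm (indicator S x * (g x * p x)) \<le> norm (K * (indicator {0..1} x * p x))"
    proof (rule AE_I2)
      fix x
      show "norm (indicator S x * (g x * p x)) \<le> norm (K * (indicator {0..1} x * p x))"
      proof (cases "x \<in> S")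
        case True
        then have x: "x \<in> {0..1}" using S by auto
        then have "\<bar>g x\<bar> * \<bar>p x\<bar> \<le> K * \<bar>p x\<bar>" using K by (intro mult_right_mono) auto
        moreover have "K * \<bar>p x\<bar> \<le> \<bar>K\<bar> * \<bar>p x\<bar>" by (intro mult_right_mono) auto
        ultimately have "\<bar>g x\<bar> * \<bar>p x\<bar> \<le> \<bar>K\<bar> * \<bar>p x\<bar>" by linarith
        then show ?thesis using True x p_nonneg by (simp add: abs_mult)
      qed auto
    qed
  qed
qed

end



context full begin

lemma S_meas[measurable]: "{\<theta>\<in>{0..1}. psi \<theta> = m} \<in> sets lborel"
  by measurable

lemma bound_Lw: "\<theta> \<in> {0..1} \<Longrightarrow> \<bar>Lw f1 f2 \<mu>1 \<mu>2 x \<theta>\<bar> \<le> \<bar>Aw x\<bar> + \<bar>Bw x\<bar>"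
proof -
  assume t: "\<theta> \<in> {0..1}"
  have "\<bar>\<theta> * Aw x + (1 - \<theta>) * Bw x\<bar> \<le> \<bar>\<theta> * Aw x\<bar> + \<bar>(1 - \<theta>) * Bw x\<bar>" by (rule abs_triangle_ineq)
  also have "\<dots> = \<theta> * \<bar>Aw x\<bar> + (1 - \<theta>) * \<bar>Bw x\<bar>" using t by (simp add: abs_mult)
  also have "\<dots> \<le> \<bar>Aw x\<bar> + \<bar>Bw x\<bar>" using t
    by (smt (verit, best) abs_ge_zero atLeastAtMost_iff mult_left_le_one_le)
  finally show ?thesis by (simp add: Lw_AB)
qed

definition "Ksum u = (\<Sum>i\<in>{1..n}. \<bar>Aw (u i)\<bar> + \<bar>Bw (u i)\<bar>)"

lemma bound_K: "k \<in> {1..n} \<Longrightarrow> \<theta> \<in> {0..1} \<Longrightarrow> \<bar>Lw f1 f2 \<mu>1 \<mu>2 (u k) \<theta>\<bar> \<le> Ksum u"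
proof -
  assume k: "k \<in> {1..n}" and t: "\<theta> \<in> {0..1}"
  have "\<bar>Aw (u k)\<bar> + \<bar>Bw (u k)\<bar> \<le> Ksum u"
    unfolding Ksum_def using k by (intro member_le_sum) auto
  then show ?thesis using bound_Lw[OF t, of "u k"] by linarith
qed

lemma intMin: "integrable lborel (\<lambda>\<theta>. indicator {0..1} \<theta> * (Min ((\<lambda>i. Lw f1 f2 \<mu>1 \<mu>2 (u i) \<theta>) ` {1..n}) * p \<theta>))"
proof (rule int_S)
  show "(\<lambda>\<theta>. Min ((\<lambda>i. Lw f1 f2 \<mu>1 \<mu>2 (u i) \<theta>) ` {1..n})) \<in> borel_measurable lborel"
    unfolding Lw_AB by measurable
  show "\<forall>\<theta>\<in>{0..1}. \<bar>Min ((\<lambda>i. Lw f1 f2 \<mu>1 \<mu>2 (u i) \<theta>) ` {1..n})\<bar> \<le> Ksum u"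
  proof
    fix \<theta> :: real assume t: "\<theta> \<in> {0..1}"
    have "Min ((\<lambda>i. Lw f1 f2 \<mu>1 \<mu>2 (u i) \<theta>) ` {1..n}) \<in> (\<lambda>i. Lw f1 f2 \<mu>1 \<mu>2 (u i) \<theta>) ` {1..n}"
      using n1 by (intro Min_in) auto
    then obtain k where "k \<in> {1..n}" "Min ((\<lambda>i. Lw f1 f2 \<mu>1 \<mu>2 (u i) \<theta>) ` {1..n}) = Lw f1 f2 \<mu>1 \<mu>2 (u k) \<theta>"
      by auto
    then show "\<bar>Min ((\<lambda>i. Lw f1 f2 \<mu>1 \<mu>2 (u i) \<theta>) ` {1..n})\<bar> \<le> Ksum u" using bound_K t by simp
  qed
qed auto

lemma intPsi: "integrable lborel (\<lambda>\<theta>. indicator {0..1} \<theta> * (Lw f1 f2 \<mu>1 \<mu>2 (u (psi \<theta>)) \<theta> * p \<theta>))"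
proof (rule int_S)
  show "(\<lambda>\<theta>. Lw f1 f2 \<mu>1 \<mu>2 (u (psi \<theta>)) \<theta>) \<in> borel_measurable lborel"
    unfolding Lw_AB by measurable
  show "\<forall>\<theta>\<in>{0..1}. \<bar>Lw f1 f2 \<mu>1 \<mu>2 (u (psi \<theta>)) \<theta>\<bar> \<le> Ksum u"
    using bound_K psi_prop by blast
qed auto

end



context full begin

abbreviation "SS m \<equiv> {\<theta>\<in>{0..1}. psi \<theta> = m}"
abbreviation "TT m \<equiv> (LINT \<theta>:SS m|lborel. \<theta> * p \<theta>)"

lemma P_eq: "probM p psi m = integral\<^sup>L lborel (\<lambda>\<theta>. indicator (SS m) \<theta> * (1 * p \<theta>))"
  by (simp add: probM_def set_lebesgue_integral_def)
lemma T_eq: "TT m = integral\<^sup>L lborel (\<lambda>\<theta>. indicator (SS m) \<theta> * (\<theta> * p \<theta>))"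
  by (simp add: set_lebesgue_integral_def)
lemma iP: "integrable lborel (\<lambda>\<theta>. indicator (SS m) \<theta> * (1 * p \<theta>))"
  by (rule int_S[where K=1]) auto
lemma iT: "integrable lborel (\<lambda>\<theta>. indicator (SS m) \<theta> * (\<theta> * p \<theta>))"
  by (rule int_S[where K=1]) auto

lemma P_nonneg: "probM p psi m \<ge> 0"
  unfolding P_eq by (rule integral_nonneg_AE) (use p_nonneg in \<open>auto simp: indicator_def\<close>)

lemma T_nonneg: "TT m \<ge> 0"
  unfolding T_eq by (rule integral_nonneg_AE) (use p_nonneg in \<open>auto simp: indicator_def\<close>)

lemma T_le_P: "TT m \<le> probM p psi m"
  unfolding T_eq P_eq
proof (rule integral_mono[OF iT iP])
  fix \<theta> :: real
  show "indicator (SS m) \<theta> * (\<theta> * p \<theta>) \<le> indicator (SS m) \<theta> * (1 * p \<theta>)"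
  proof (cases "\<theta> \<in> SS m")
    case True
    then have "\<theta> \<le> 1" "p \<theta> \<ge> 0" using p_nonneg by auto
    then show ?thesis using True by (simp add: mult_right_le_one_le mult_left_le_one_le)
  qed simp
qed

lemma key:
  assumes m: "m \<in> {1..n}" and P0: "probM p psi m \<noteq> 0"
  shows "v m * probM p psi m = TT m"
proof -
  define P where "P = probM p psi m"
  define T where "T = TT m"
  have Ppos: "P > 0" using P_nonneg[of m] P0 by (simp add: P_def)
  define t where "t = T / P"
  have t01: "t \<in> {0..1}" using Ppos T_nonneg[of m] T_le_P[of m] by (auto simp: t_def P_def T_def)
  define v' where "v' = v(m := t)"
  have v'r: "\<forall>i\<in>{1..n}. v' i \<in> {0..1}" using v_range t01 by (auto simp: v'_def)
  define dA where "dA = Aw t - Aw (v m)"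
  define dB where "dB = Bw t - Bw (v m)"
  let ?F = "\<lambda>\<theta>. indicator {0..1} \<theta> * (Lw f1 f2 \<mu>1 \<mu>2 (v (psi \<theta>)) \<theta> * p \<theta>)"
  let ?F' = "\<lambda>\<theta>. indicator {0..1} \<theta> * (Lw f1 f2 \<mu>1 \<mu>2 (v' (psi \<theta>)) \<theta> * p \<theta>)"
  let ?GP = "\<lambda>\<theta>. indicator (SS m) \<theta> * (1 * p \<theta>)"
  let ?GT = "\<lambda>\<theta>. indicator (SS m) \<theta> * (\<theta> * p \<theta>)"
  have h1: "Lbar n f1 f2 \<mu>1 \<mu>2 p v = integral\<^sup>L lborel ?F"
    unfolding Lbar_eq Min_psi ..
  have h2: "Lbar n f1 f2 \<mu>1 \<mu>2 p v' \<le> integral\<^sup>L lborel ?F'"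
    unfolding Lbar_eq
  proof (rule integral_mono[OF intMin intPsi])
    fix \<theta> :: real
    show "indicator {0..1} \<theta> * (Min ((\<lambda>i. Lw f1 f2 \<mu>1 \<mu>2 (v' i) \<theta>) ` {1..n}) * p \<theta>) \<le> ?F' \<theta>"
    proof (cases "\<theta> \<in> {0..1}")
      case True
      have "Min ((\<lambda>i. Lw f1 f2 \<mu>1 \<mu>2 (v' i) \<theta>) ` {1..n}) \<le> Lw f1 f2 \<mu>1 \<mu>2 (v' (psi \<theta>)) \<theta>"
        using psi_prop[of \<theta>] by (intro Min_le) auto
      then show ?thesis using True p_nonneg by (simp add: mult_right_mono)
    qed simp
  qed
  have pw: "?F' \<theta> = ?F \<theta> + dA * ?GT \<theta> + dB * ?GP \<theta> - dB * ?GT \<theta>" for \<theta>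
  proof (cases "\<theta> \<in> {0..1}")
    case True
    show ?thesis
    proof (cases "psi \<theta> = m")
      case True
      then show ?thesis using \<open>\<theta> \<in> {0..1}\<close>
        by (simp add: v'_def Lw_AB dA_def dB_def algebra_simps)
    next
      case False
      then show ?thesis using \<open>\<theta> \<in> {0..1}\<close> by (simp add: v'_def)
    qed
  qed (auto simp: indicator_def)
  have h3: "integral\<^sup>L lborel ?F' = integral\<^sup>L lborel ?F + dA * T + dB * P - dB * T"
    unfolding pw T_def P_def T_eq P_eq using intPsi[of v] iT[of m] iP[of m] by simp
  have "Lbar n f1 f2 \<mu>1 \<mu>2 p v \<le> Lbar n f1 f2 \<mu>1 \<mu>2 p v'" using v_opt v'r by blast
  then have "0 \<le> dA * T + dB * P - dB * T" using h1 h2 h3 by linarith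
  also have "dA * T + dB * P - dB * T = P * (dA * t + dB * (1 - t))"
    using Ppos by (simp add: t_def field_simps)
  finally have "0 \<le> dA * t + dB * (1 - t)" using Ppos by (simp add: zero_le_mult_iff)
  then have le: "Lw f1 f2 \<mu>1 \<mu>2 (v m) t \<le> Lw f1 f2 \<mu>1 \<mu>2 t t"
    by (simp add: Lw_AB dA_def dB_def algebra_simps)
  have "v m = t"
  proof (rule ccontr)
    assume "v m \<noteq> t"
    then have "Lw f1 f2 \<mu>1 \<mu>2 t t < Lw f1 f2 \<mu>1 \<mu>2 (v m) t"
      using Lw_strict[OF t01] v_range m by auto
    then show False using le by simp
  qed
  then show ?thesis using Ppos by (simp add: t_def P_def T_def)
qed

end



context full begin

lemma JP_val:
  assumes P0: "probM p psi m \<noteq> 0" and m: "m \<in> {1..n}"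
  shows "JP p psi (eta0 \<mu>1 \<mu>2) s m x1 x2 = (if s = 1 then (1 - v m) * (x2 - \<mu>2)^2 else v m * (x1 - \<mu>1)^2)"
proof -
  define P where "P = probM p psi m"
  have kk: "TT m = v m * P" using key[OF m P0] by (simp add: P_def)
  show ?thesis
  proof (cases "s = 1")
    case True
    have "(LINT \<theta>:SS m|lborel. qloss \<theta> x1 x2 (eta0 \<mu>1 \<mu>2 (s, xsel s x1 x2) m) * p \<theta>)
        = integral\<^sup>L lborel (\<lambda>\<theta>. (x2 - \<mu>2)^2 * (indicator (SS m) \<theta> * (1 * p \<theta>)) - (x2 - \<mu>2)^2 * (indicator (SS m) \<theta> * (\<theta> * p \<theta>)))"
      unfolding set_lebesgue_integral_def using True
      by (intro Bochner_Integration.integral_cong) (auto simp: qloss_def eta0_def xsel_def algebra_simps)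
    also have "\<dots> = (x2 - \<mu>2)^2 * P - (x2 - \<mu>2)^2 * TT m"
      using iP[of m] iT[of m] by (simp add: P_eq P_def set_lebesgue_integral_def)
    finally show ?thesis using True P0 unfolding JP_def kk P_def[symmetric]
      by (simp add: field_simps)
  next
    case False
    have "(LINT \<theta>:SS m|lborel. qloss \<theta> x1 x2 (eta0 \<mu>1 \<mu>2 (s, xsel s x1 x2) m) * p \<theta>)
        = integral\<^sup>L lborel (\<lambda>\<theta>. (x1 - \<mu>1)^2 * (indicator (SS m) \<theta> * (\<theta> * p \<theta>)))"
      unfolding set_lebesgue_integral_def using False
      by (intro Bochner_Integration.integral_cong) (auto simp: qloss_def eta0_def xsel_def algebra_simps)
    also have "\<dots> = (x1 - \<mu>1)^2 * TT m"
      using iT[of m] by (simp add: set_lebesgue_integral_def)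
    finally show ?thesis using False P0 unfolding JP_def kk P_def[symmetric]
      by (simp add: field_simps)
  qed
qed

lemma platform:
  assumes m: "m \<in> {1..n}"
  shows "JP p psi (eta0 \<mu>1 \<mu>2) (wqd \<mu>1 \<mu>2 v m x1 x2) m x1 x2 \<le> JP p psi (eta0 \<mu>1 \<mu>2) s m x1 x2"
proof (cases "probM p psi m = 0")
  case True
  then show ?thesis by (simp add: JP_def)
next
  case False
  show ?thesis unfolding JP_val[OF False m] by (auto simp: wqd_def)
qed

lemma is_BNE: "BNE n f1 f2 p psi (wqd \<mu>1 \<mu>2 v) (eta0 \<mu>1 \<mu>2)"
  unfolding BNE_def
proof (intro conjI)
  show "psi \<in> lborel \<rightarrow>\<^sub>M count_space UNIV" by (rule psi_meas)
  show "\<forall>\<theta>\<in>{0..1}. psi \<theta> \<in> {1..n}" using psi_prop by blast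
  show "\<forall>m. (\<lambda>z. wqd \<mu>1 \<mu>2 v m (fst z) (snd z)) \<in> lborel \<Otimes>\<^sub>M lborel \<rightarrow>\<^sub>M count_space UNIV"
    unfolding wqd_def by measurable
  show "\<forall>m x1 x2. wqd \<mu>1 \<mu>2 v m x1 x2 \<in> {1, 2}" by (simp add: wqd_def)
  show "\<forall>s m. (\<lambda>x. eta0 \<mu>1 \<mu>2 (s, x) m) \<in> borel_measurable lborel"
  proof (intro allI)
    fix s m
    show "(\<lambda>x. eta0 \<mu>1 \<mu>2 (s, x) m) \<in> borel_measurable lborel"
      by (cases "s = 1") (simp_all add: eta0_def)
  qed
  show "\<forall>\<theta>\<in>{0..1}. \<forall>m\<in>{1..n}. JR f1 f2 (wqd \<mu>1 \<mu>2 v) (eta0 \<mu>1 \<mu>2) (psi \<theta>) \<theta> \<le> JR f1 f2 (wqd \<mu>1 \<mu>2 v) (eta0 \<mu>1 \<mu>2) m \<theta>"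
    using psi_prop by (simp add: JR_eq)
  show "\<forall>m\<in>{1..n}. \<forall>x1 x2. \<forall>s\<in>{1, 2}. JP p psi (eta0 \<mu>1 \<mu>2) (wqd \<mu>1 \<mu>2 v m x1 x2) m x1 x2 \<le> JP p psi (eta0 \<mu>1 \<mu>2) s m x1 x2"
    using platform by blast
  show "\<forall>m\<in>{1..n}. \<forall>s\<in>{1, 2}. \<forall>x.
        condpart f1 f2 p psi (wqd \<mu>1 \<mu>2 v) m s x (\<lambda>_ _. 1) > 0 \<longrightarrow>
        eta0 \<mu>1 \<mu>2 (s, x) m = (condpart f1 f2 p psi (wqd \<mu>1 \<mu>2 v) m s x (\<lambda>a b. a) / condpart f1 f2 p psi (wqd \<mu>1 \<mu>2 v) m s x (\<lambda>_ _. 1),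
                       condpart f1 f2 p psi (wqd \<mu>1 \<mu>2 v) m s x (\<lambda>a b. b) / condpart f1 f2 p psi (wqd \<mu>1 \<mu>2 v) m s x (\<lambda>_ _. 1))"
    using eta_ok by blast
qed

end

lemma Lbar_comp:
  assumes "bij_betw \<sigma> {1..n} {1..n}"
  shows "Lbar n f1 f2 \<mu>1 \<mu>2 p (u \<circ> \<sigma>) = Lbar n f1 f2 \<mu>1 \<mu>2 p u"
proof -
  have "(\<lambda>i. Lw f1 f2 \<mu>1 \<mu>2 ((u \<circ> \<sigma>) i) \<theta>) ` {1..n} = (\<lambda>i. Lw f1 f2 \<mu>1 \<mu>2 (u i) \<theta>) ` {1..n}" for \<theta>
  proof -
    have "(\<lambda>i. Lw f1 f2 \<mu>1 \<mu>2 ((u \<circ> \<sigma>) i) \<theta>) ` {1..n} = (\<lambda>i. Lw f1 f2 \<mu>1 \<mu>2 (u i) \<theta>) ` (\<sigma> ` {1..n})"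
      by (simp add: image_image)
    also have "\<sigma> ` {1..n} = {1..n}" using assms by (simp add: bij_betw_def)
    finally show ?thesis .
  qed
  then show ?thesis by (simp add: Lbar_def)
qed

lemma Lbar_cong:
  assumes "\<forall>i\<in>{1..n}. u i = u' i"
  shows "Lbar n f1 f2 \<mu>1 \<mu>2 p u = Lbar n f1 f2 \<mu>1 \<mu>2 p u'"
proof -
  have "(\<lambda>i. Lw f1 f2 \<mu>1 \<mu>2 (u i) \<theta>) ` {1..n} = (\<lambda>i. Lw f1 f2 \<mu>1 \<mu>2 (u' i) \<theta>) ` {1..n}" for \<theta>
    using assms by (intro image_cong) auto
  then show ?thesis by (simp add: Lbar_def)
qed

lemma sort_perm:
  fixes w :: "nat \<Rightarrow> real"
  shows "\<exists>\<sigma>. bij_betw \<sigma> {1..n} {1..n} \<and> (\<forall>i\<in>{1..n}. \<forall>j\<in>{1..n}. i \<le> j \<longrightarrow> w (\<sigma> i) \<le> w (\<sigma> j))"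
proof -
  define xs where "xs = sort_key w [1..<n+1]"
  define \<sigma> where "\<sigma> i = xs ! (i - 1)" for i
  have dxs: "distinct xs" and sxs: "set xs = {1..n}" and lxs: "length xs = n" and srt: "sorted (map w xs)"
    by (auto simp: xs_def)
  have bij: "bij_betw \<sigma> {1..n} {1..n}"
  proof (rule bij_betw_imageI)
    show "inj_on \<sigma> {1..n}"
    proof (rule inj_onI)
      fix i j assume ij: "i \<in> {1..n}" "j \<in> {1..n}" "\<sigma> i = \<sigma> j"
      then have "i - 1 = j - 1" using dxs lxs by (auto simp: \<sigma>_def nth_eq_iff_index_eq)
      then show "i = j" using ij by auto
    qed
    show "\<sigma> ` {1..n} = {1..n}"
    proof
      show "\<sigma> ` {1..n} \<subseteq> {1..n}"
      proof
        fix y assume "y \<in> \<sigma> ` {1..n}"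
        then obtain i where "i \<in> {1..n}" "y = xs ! (i - 1)" by (auto simp: \<sigma>_def)
        then have "y \<in> set xs" using lxs by auto
        then show "y \<in> {1..n}" using sxs by simp
      qed
      show "{1..n} \<subseteq> \<sigma> ` {1..n}"
      proof
        fix y assume "y \<in> {1..n}"
        then have "y \<in> set xs" using sxs by simp
        then obtain k where k: "k < n" "xs ! k = y" using lxs by (auto simp: in_set_conv_nth)
        then have "\<sigma> (k + 1) = y" by (simp add: \<sigma>_def)
        moreover have "k + 1 \<in> {1..n}" using k by auto
        ultimately show "y \<in> \<sigma> ` {1..n}" by force
      qed
    qed
  qed
  have mono: "\<forall>i\<in>{1..n}. \<forall>j\<in>{1..n}. i \<le> j \<longrightarrow> w (\<sigma> i) \<le> w (\<sigma> j)"
  proof (intro ballI impI)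
    fix i j assume ij: "i \<in> {1..n}" "j \<in> {1..n}" "i \<le> j"
    have "(map w xs) ! (i - 1) \<le> (map w xs) ! (j - 1)"
      using ij lxs by (intro sorted_nth_mono[OF srt]) auto
    then show "w (\<sigma> i) \<le> w (\<sigma> j)" using ij lxs by (simp add: \<sigma>_def)
  qed
  show ?thesis using bij mono by blast
qed


theorem theorem2:
  fixes f1 f2 p :: "real \<Rightarrow> real" and \<mu>1 \<mu>2 :: real and n :: nat and w :: "nat \<Rightarrow> real"
  assumes n: "n \<ge> 1"
    and f1_meas: "f1 \<in> borel_measurable lborel"
    and f1_pos: "\<forall>x. f1 x > 0"
    and f1_int: "integrable lborel f1" and f1_one: "integral\<^sup>L lborel f1 = 1"
    and f1_mean_int: "integrable lborel (\<lambda>x. x * f1 x)"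
    and f1_mean: "(LINT x|lborel. x * f1 x) = \<mu>1"
    and f1_sym: "\<forall>t. f1 (\<mu>1 + t) = f1 (\<mu>1 - t)"
    and f1_var: "integrable lborel (\<lambda>x. x^2 * f1 x)"
    and f2_meas: "f2 \<in> borel_measurable lborel"
    and f2_pos: "\<forall>x. f2 x > 0"
    and f2_int: "integrable lborel f2" and f2_one: "integral\<^sup>L lborel f2 = 1"
    and f2_mean_int: "integrable lborel (\<lambda>x. x * f2 x)"
    and f2_mean: "(LINT x|lborel. x * f2 x) = \<mu>2"
    and f2_sym: "\<forall>t. f2 (\<mu>2 + t) = f2 (\<mu>2 - t)"
    and f2_var: "integrable lborel (\<lambda>x. x^2 * f2 x)"
    and p_meas: "p \<in> borel_measurable lborel"
    and p_nonneg: "\<forall>\<theta>\<in>{0..1}. p \<theta> \<ge> 0"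
    and p_int: "set_integrable lborel {0..1} p"
    and p_one: "(LINT \<theta>:{0..1}|lborel. p \<theta>) = 1"
    and w_range: "\<forall>i\<in>{1..n}. w i \<in> {0..1}"
    and w_opt: "\<forall>w'. (\<forall>i\<in>{1..n}. w' i \<in> {0..1}) \<longrightarrow>
                  Lbar n f1 f2 \<mu>1 \<mu>2 p w \<le> Lbar n f1 f2 \<mu>1 \<mu>2 p w'"
  shows "\<exists>\<sigma>. bij_betw \<sigma> {1..n} {1..n} \<and>
             (\<forall>i\<in>{1..n}. \<forall>j\<in>{1..n}. i \<le> j \<longrightarrow> w (\<sigma> i) \<le> w (\<sigma> j)) \<and>
             (\<exists>\<psi> \<eta>. BNE n f1 f2 p \<psi> (wqd \<mu>1 \<mu>2 (w \<circ> \<sigma>)) \<eta>)"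
proof -
  obtain \<sigma> where bij: "bij_betw \<sigma> {1..n} {1..n}"
      and mono: "\<forall>i\<in>{1..n}. \<forall>j\<in>{1..n}. i \<le> j \<longrightarrow> w (\<sigma> i) \<le> w (\<sigma> j)"
    using sort_perm[of n w] by blast
  have vopt: "\<forall>w'. (\<forall>i\<in>{1..n}. w' i \<in> {0..1}) \<longrightarrow>
                  Lbar n f1 f2 \<mu>1 \<mu>2 p (w \<circ> \<sigma>) \<le> Lbar n f1 f2 \<mu>1 \<mu>2 p w'"
  proof (intro allI impI)
    fix w' :: "nat \<Rightarrow> real" assume w': "\<forall>i\<in>{1..n}. w' i \<in> {0..1}"
    define \<tau> where "\<tau> = inv_into {1..n} \<sigma>"
    have bt: "bij_betw \<tau> {1..n} {1..n}" unfolding \<tau>_def using bij by (rule bij_betw_inv_into)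
    have r: "\<forall>i\<in>{1..n}. (w' \<circ> \<tau>) i \<in> {0..1}"
      using w' bt by (auto simp: bij_betw_def)
    have "Lbar n f1 f2 \<mu>1 \<mu>2 p (w \<circ> \<sigma>) = Lbar n f1 f2 \<mu>1 \<mu>2 p w" by (rule Lbar_comp[OF bij])
    also have "\<dots> \<le> Lbar n f1 f2 \<mu>1 \<mu>2 p (w' \<circ> \<tau>)" using w_opt r by blast
    also have "\<dots> = Lbar n f1 f2 \<mu>1 \<mu>2 p ((w' \<circ> \<tau>) \<circ> \<sigma>)" by (rule Lbar_comp[OF bij, symmetric])
    also have "\<dots> = Lbar n f1 f2 \<mu>1 \<mu>2 p w'"
    proof (rule Lbar_cong)
      show "\<forall>i\<in>{1..n}. (w' \<circ> \<tau> \<circ> \<sigma>) i = w' i"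
        using bij by (auto simp: \<tau>_def bij_betw_def inv_into_f_f)
    qed
    finally show "Lbar n f1 f2 \<mu>1 \<mu>2 p (w \<circ> \<sigma>) \<le> Lbar n f1 f2 \<mu>1 \<mu>2 p w'" .
  qed
  have vr: "\<forall>i\<in>{1..n}. (w \<circ> \<sigma>) i \<in> {0..1}" using w_range bij by (auto simp: bij_betw_def)
  interpret F: full f1 f2 \<mu>1 \<mu>2 p n "w \<circ> \<sigma>"
    by (rule full.intro[OF gm.intro full_axioms.intro])
       (use assms vopt vr in auto)
  show ?thesis using bij mono F.is_BNE by blast
qed

end
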